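(* Let $k\in\mathbb{R}$, $a_1>0$, $c>0$ and $\gamma\ge 1$ be fixed, with $k\neq 0$ and $c^2/\gamma\neq k^2a_1^2$, and let $c_T(k)$ denote a fixed (possibly complex) square root of $c^2/\gamma-k^2a_1^2$. For $Pr>0$ consider $$P(X)= X^{3} + 2\,i\,k\,a_1 \left( 1+\frac{3\,\gamma}{4\,Pr} \right)X^{2} - \left(c^{2} + \frac{3\,\gamma}{Pr}a_1^2\,k^2\right)X - i\,\frac{3\,k\,a_1\,c^2}{2\,Pr}.$$ Then, for small $Pr>0$, the three roots $\xi^{(-)}_{Pr},\xi^{(0)}_{Pr},\xi^{(+)}_{Pr}$ of $P$ satisfy, as $Pr\to0$, $$\xi_{Pr}^{(\mp)}=-ik\,a_1\mp c_T(k)\pm\frac{(\gamma-1)\,c^2\,(k\,a_1\mp i\,c_T(k))}{3\,\gamma^2\,k\,a_1\,c_T(k)}\,Pr+\mathcal{O}(Pr^2),$$ $$\xi_{Pr}^{(0)}=i\,\frac{3\,k\,a_1\,\gamma}{2\,Pr}+\mathcal{O}(Pr),$$ where $\xi^{(\mp)}_{Pr}$ are smooth in $Pr$ near $0$ with $\xi^{(\mp)}_0=-ika_1\mp c_T(k)$.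
   Context: $P$ is the dispersion polynomial of the linearized 1D compressible Navier–Stokes equations, with $a_1=2\mu/(3\rho)$, $c$ the adiabatic sound speed, $\gamma=C_p/C_v$ and $Pr$ the Prandtl number. In the formula for $\xi^{(\mp)}_{Pr}$, the upper signs give $\xi^{(-)}_{Pr}$ and the lower signs give $\xi^{(+)}_{Pr}$. *)

theory Defs
  imports "HOL-Analysis.Analysis" "HOL-Library.Landau_Symbols"
begin

definition dispP :: "real \<Rightarrow> real \<Rightarrow> real \<Rightarrow> real \<Rightarrow> real \<Rightarrow> complex poly" where
  "dispP a1 c \<gamma> k Pr =
     [: - \<i> * complex_of_real (3 * k * a1 * c^2 / (2 * Pr)),
        - complex_of_real (c^2 + 3 * \<gamma> / Pr * a1^2 * k^2),
        2 * \<i> * complex_of_real (k * a1 * (1 + 3 * \<gamma> / (4 * Pr))),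
        1 :]"

definition nth_vderiv :: "nat \<Rightarrow> (real \<Rightarrow> 'a::real_normed_vector) \<Rightarrow> real \<Rightarrow> 'a" where
  "nth_vderiv n f = ((\<lambda>g t. vector_derivative g (at t)) ^^ n) f"

definition smooth_on :: "real set \<Rightarrow> (real \<Rightarrow> 'a::real_normed_vector) \<Rightarrow> bool" where
  "smooth_on S f \<longleftrightarrow> open S \<and> (\<forall>n. nth_vderiv n f differentiable_on S)"

end

theory Submission
  imports Defs "HOL-Complex_Analysis.Complex_Analysis"
begin

lemma nth_vderiv_Suc: "nth_vderiv (Suc n) f t = vector_derivative (nth_vderiv n f) (at t)"
  by (simp add: nth_vderiv_def)

lemma nth_vderiv_holo:
  fixes G :: "complex \<Rightarrow> complex"
  assumes hol: "G holomorphic_on ball 0 e"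
  shows "\<forall>t. \<bar>t\<bar> < e \<longrightarrow> nth_vderiv n (\<lambda>t. G (of_real t)) t = (deriv ^^ n) G (of_real t)"
proof (induction n)
  case 0
  then show ?case by (simp add: nth_vderiv_def)
next
  case (Suc n)
  show ?case
  proof (intro allI impI)
    fix t :: real assume t: "\<bar>t\<bar> < e"
    have hn: "(deriv ^^ n) G holomorphic_on ball 0 e"
      by (rule holomorphic_higher_deriv[OF hol open_ball])
    have "((deriv ^^ n) G has_field_derivative deriv ((deriv ^^ n) G) (of_real t)) (at (of_real t))"
      by (rule holomorphic_derivI[OF hn open_ball]) (use t in simp)
    then have d: "((\<lambda>s. (deriv ^^ n) G (of_real s)) has_vector_derivative deriv ((deriv ^^ n) G) (of_real t)) (at t)"
      by (rule has_vector_derivative_real_field)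
    have d2: "(nth_vderiv n (\<lambda>t. G (of_real t)) has_vector_derivative deriv ((deriv ^^ n) G) (of_real t)) (at t)"
      by (rule has_vector_derivative_transform_within_open[OF d, of "{-e<..<e}"])
         (use t Suc in \<open>auto simp: abs_less_iff\<close>)
    show "nth_vderiv (Suc n) (\<lambda>t. G (of_real t)) t = (deriv ^^ Suc n) G (of_real t)"
      using vector_derivative_at[OF d2] by (simp add: nth_vderiv_Suc)
  qed
qed

lemma smooth_holo:
  fixes G :: "complex \<Rightarrow> complex"
  assumes hol: "G holomorphic_on ball 0 e" and de: "0 < d" "d \<le> e"
  shows "smooth_on {-d<..<d} (\<lambda>t. G (of_real t))"
  unfolding smooth_on_def
proof (intro conjI allI)
  fix n
  show "nth_vderiv n (\<lambda>t. G (complex_of_real t)) differentiable_on {- d<..<d}"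
    unfolding differentiable_on_def
  proof
    fix t :: real assume "t \<in> {-d<..<d}"
    then have t: "\<bar>t\<bar> < e" using de by auto
    have hn: "(deriv ^^ n) G holomorphic_on ball 0 e"
      by (rule holomorphic_higher_deriv[OF hol open_ball])
    have "((deriv ^^ n) G has_field_derivative deriv ((deriv ^^ n) G) (of_real t)) (at (of_real t))"
      by (rule holomorphic_derivI[OF hn open_ball]) (use t in simp)
    then have d: "((\<lambda>s. (deriv ^^ n) G (of_real s)) has_vector_derivative deriv ((deriv ^^ n) G) (of_real t)) (at t)"
      by (rule has_vector_derivative_real_field)
    have d2: "(nth_vderiv n (\<lambda>t. G (of_real t)) has_vector_derivative deriv ((deriv ^^ n) G) (of_real t)) (at t)"
      by (rule has_vector_derivative_transform_within_open[OF d, of "{-e<..<e}"])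
         (use t nth_vderiv_holo[OF hol, of n] in \<open>auto simp: abs_less_iff\<close>)
    then show "nth_vderiv n (\<lambda>t. G (complex_of_real t)) differentiable at t within {-d<..<d}"
      using differentiableI_vector differentiable_at_withinI by blast
  qed
qed simp

lemma smooth_const: "0 < d \<Longrightarrow> smooth_on {-d<..<d} (\<lambda>t::real. C::complex)"
  using smooth_holo[of "\<lambda>_. C" d d] by simp

lemma local_inverse:
  fixes F :: "complex \<Rightarrow> complex"
  assumes holF: "F holomorphic_on S" and oS: "open S" and X0: "X0 \<in> S" and F0: "F X0 = 0"
    and dF: "(F has_field_derivative D) (at X0)" and Dnz: "D \<noteq> 0"
  obtains e G where "e > 0" "G holomorphic_on ball 0 e" "G 0 = X0"
    "\<forall>p\<in>ball 0 e. G p \<in> S \<and> F (G p) = p" "(G has_field_derivative inverse D) (at 0)"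
proof -
  have "deriv F X0 = D" using dF by (rule DERIV_imp_deriv)
  then obtain r where r: "r > 0" "ball X0 r \<subseteq> S" "open (F ` ball X0 r)" "inj_on F (ball X0 r)"
    using has_complex_derivative_locally_invertible[OF holF X0 oS] Dnz by metis
  have holF': "F holomorphic_on ball X0 r" using holF r(2) holomorphic_on_subset by blast
  obtain G where G: "G holomorphic_on (F ` ball X0 r)"
    "\<And>z. z \<in> ball X0 r \<Longrightarrow> deriv F z * deriv G (F z) = 1"
    "\<And>z. z \<in> ball X0 r \<Longrightarrow> G (F z) = z"
    using holomorphic_has_inverse[OF holF' open_ball r(4)] by metis
  have "0 \<in> F ` ball X0 r" using F0 r(1) by (metis centre_in_ball imageI)
  then obtain e where e: "e > 0" "ball 0 e \<subseteq> F ` ball X0 r"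
    using r(3) open_contains_ball by blast
  show ?thesis
  proof (rule that[of e G])
    show "e > 0" by fact
    show "G holomorphic_on ball 0 e" using G(1) e(2) holomorphic_on_subset by blast
    show "G 0 = X0" using G(3)[of X0] F0 r(1) by simp
    show "\<forall>p\<in>ball 0 e. G p \<in> S \<and> F (G p) = p"
    proof
      fix p :: complex assume "p \<in> ball 0 e"
      then obtain z where z: "z \<in> ball X0 r" "p = F z" using e(2) by blast
      then show "G p \<in> S \<and> F (G p) = p" using G(3)[OF z(1)] r(2) by auto
    qed
    have "D * deriv G 0 = 1" using G(2)[of X0] F0 r(1) \<open>deriv F X0 = D\<close> by simp
    then have "deriv G 0 = inverse D" using Dnz by (simp add: field_simps)
    moreover have "(G has_field_derivative deriv G 0) (at 0)"
      using G(1) r(3) \<open>0 \<in> F ` ball X0 r\<close> holomorphic_derivI by blast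
    ultimately show "(G has_field_derivative inverse D) (at 0)" by simp
  qed
qed

lemma holo_asym:
  fixes G :: "complex \<Rightarrow> complex"
  assumes hol: "G holomorphic_on ball 0 e" and e: "e > 0" and dG: "(G has_field_derivative D') (at 0)"
  shows "(\<lambda>t. G (of_real t) - (G 0 + D' * of_real t)) \<in> O[at_right 0](\<lambda>t. complex_of_real (t^2))"
    and "(\<lambda>t. G (of_real t) - G 0) \<in> O[at_right 0](\<lambda>t. complex_of_real t)"
proof -
  define H where "H = (\<lambda>z. if z = 0 then deriv G 0 else (G z - G 0) / (z - 0))"
  have dG0: "deriv G 0 = D'" using dG by (rule DERIV_imp_deriv)
  have holH: "H holomorphic_on ball 0 e" unfolding H_def by (rule pole_lemma_open[OF hol open_ball])
  have "(H has_field_derivative deriv H 0) (at 0)"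
    by (rule holomorphic_derivI[OF holH open_ball]) (use e in simp)
  then have "((\<lambda>h. (H (0 + h) - H 0) / h) \<longlongrightarrow> deriv H 0) (at 0)"
    by (simp add: DERIV_def)
  then have "\<forall>\<^sub>F h in at 0. dist ((H (0 + h) - H 0) / h) (deriv H 0) < 1"
    by (rule tendstoD) simp
  then obtain d where d: "d > 0" "\<And>h. h \<noteq> 0 \<Longrightarrow> dist h 0 < d \<Longrightarrow> dist ((H h - H 0) / h) (deriv H 0) < 1"
    by (auto simp: eventually_at)
  define C where "C = norm (deriv H 0) + 1"
  have bnd: "norm (H h - H 0) \<le> C * norm h" if "h \<noteq> 0" "norm h < d" for h
  proof -
    have "norm ((H h - H 0) / h - deriv H 0) < 1" using d(2)[of h] that by (simp add: dist_norm)
    then have "norm ((H h - H 0) / h) \<le> C" unfolding C_def by norm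
    then show ?thesis using that by (simp add: norm_divide divide_le_eq mult.commute)
  qed
  have Ht: "G (of_real t) - G 0 = of_real t * H (of_real t)" if "t \<noteq> 0" for t :: real
    using that by (simp add: H_def)
  have H0: "H 0 = D'" using dG0 by (simp add: H_def)
  have ev: "\<forall>\<^sub>F t in at_right (0::real). 0 < t \<and> t < d \<and> t < 1"
    unfolding eventually_at_right_field by (rule exI[of _ "min d 1"]) (use d in auto)
  show "(\<lambda>t. G (of_real t) - (G 0 + D' * of_real t)) \<in> O[at_right 0](\<lambda>t. complex_of_real (t^2))"
  proof (rule bigoI[where c = C], rule eventually_mono[OF ev])
    fix t :: real assume t: "0 < t \<and> t < d \<and> t < 1"
    have "G (of_real t) - (G 0 + D' * of_real t) = of_real t * (H (of_real t) - H 0)"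
      using Ht[of t] t H0 by (simp add: algebra_simps)
    also have "norm \<dots> = t * norm (H (of_real t) - H 0)" using t by (simp add: norm_mult)
    also have "\<dots> \<le> t * (C * t)"
      using bnd[of "of_real t"] t by (intro mult_left_mono) auto
    finally have *: "norm (G (of_real t) - (G 0 + D' * of_real t)) \<le> t * (C * t)" .
    have "norm (complex_of_real (t^2)) = t * t" using t by (simp add: power2_eq_square norm_mult)
    then show "norm (G (of_real t) - (G 0 + D' * of_real t)) \<le> C * norm (complex_of_real (t^2))"
      using * by (simp add: mult_ac)
  qed
  show "(\<lambda>t. G (of_real t) - G 0) \<in> O[at_right 0](\<lambda>t. complex_of_real t)"
  proof (rule bigoI[where c = "norm D' + C"], rule eventually_mono[OF ev])
    fix t :: real assume t: "0 < t \<and> t < d \<and> t < 1"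
    have "norm (H (of_real t) - H 0) \<le> C * t" using bnd[of "of_real t"] t by auto
    also have "\<dots> \<le> C" using t unfolding C_def by (simp add: mult_left_le)
    finally have "norm (H (of_real t) - H 0) \<le> C" .
    moreover have "norm (H (of_real t)) \<le> norm (H (of_real t) - H 0) + norm (H 0)"
      using norm_triangle_ineq[of "H (of_real t) - H 0" "H 0"] by simp
    ultimately have "norm (H (of_real t)) \<le> norm D' + C" using H0 by simp
    then show "norm (G (of_real t) - G 0) \<le> (norm D' + C) * norm (complex_of_real t)"
      using Ht[of t] t by (simp add: norm_mult mult.commute mult_left_mono)
  qed
qed

lemma disp_id:
  fixes a1 c \<gamma> k p :: real and X :: complex
  assumes "p \<noteq> 0" "\<gamma> \<noteq> 0"
  shows "of_real p * poly (dispP a1 c \<gamma> k p) X =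
     of_real p * (X^3 + 2 * (\<i> * of_real (k*a1)) * X^2 - of_real (c^2) * X)
     + of_real (3*\<gamma>/2) * (\<i> * of_real (k*a1)) * (X^2 + 2 * (\<i> * of_real (k*a1)) * X - of_real (c^2/\<gamma>))"
  using assms
  by (simp add: dispP_def field_simps power2_eq_square power3_eq_cube)

lemma branch:
  fixes k a1 c \<gamma> :: real and cT :: complex
  assumes a1: "a1 > 0" and c: "c > 0" and g1: "\<gamma> \<ge> 1" and k: "k \<noteq> 0"
    and ne: "c^2 / \<gamma> \<noteq> k^2 * a1^2"
    and cT: "cT^2 = complex_of_real (c^2 / \<gamma> - k^2 * a1^2)"
  shows "\<exists>\<epsilon>>0. \<exists>g::real \<Rightarrow> complex.
     (\<forall>d. 0 < d \<and> d \<le> \<epsilon> \<longrightarrow> smooth_on {-d<..<d} g)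
   \<and> g 0 = - \<i> * k * a1 - cT
   \<and> (\<forall>p. 0 < p \<and> p < \<epsilon> \<longrightarrow> poly (dispP a1 c \<gamma> k p) (g p) = 0)
   \<and> (\<forall>p. 0 < p \<and> p < \<epsilon> \<longrightarrow> g p \<in> ball (g 0) (norm cT))
   \<and> (\<lambda>Pr. g Pr - (- \<i> * k * a1 - cT
          + (\<gamma> - 1) * c^2 * (k * a1 - \<i> * cT) / (3 * \<gamma>^2 * k * a1 * cT) * Pr))
       \<in> O[at_right 0](\<lambda>Pr. complex_of_real (Pr^2))
   \<and> (\<lambda>Pr. g Pr - g 0) \<in> O[at_right 0](\<lambda>Pr. complex_of_real Pr)"
proof -
  define \<kappa> where "\<kappa> = \<i> * complex_of_real (k*a1)"
  define X0 where "X0 = - \<kappa> - cT"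
  define R where "R = (\<lambda>X. X^3 + 2 * \<kappa> * X^2 - of_real (c^2) * X)"
  define S where "S = (\<lambda>X. of_real (3*\<gamma>/2) * \<kappa> * (X^2 + 2 * \<kappa> * X - of_real (c^2/\<gamma>)))"
  define K where "K = (\<gamma> - 1) * c^2 * (k * a1 - \<i> * cT) / (3 * \<gamma>^2 * k * a1 * cT)"
  have gnz: "\<gamma> \<noteq> 0" using g1 by auto
  have cTnz: "cT \<noteq> 0"
  proof
    assume "cT = 0"
    then have "complex_of_real (c^2 / \<gamma> - k^2 * a1^2) = 0" using cT by simp
    then show False using ne by (simp del: of_real_diff)
  qed
  have knz: "\<kappa> \<noteq> 0" using k a1 by (simp add: \<kappa>_def)
  have \<kappa>2: "\<kappa>^2 = - of_real (k^2 * a1^2)"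
    by (simp add: \<kappa>_def power_mult_distrib)
  have SX0q: "X0^2 + 2 * \<kappa> * X0 - of_real (c^2/\<gamma>) = 0"
  proof -
    have "X0^2 + 2 * \<kappa> * X0 = cT^2 - \<kappa>^2" by (simp add: X0_def power2_eq_square algebra_simps)
    then show ?thesis using cT \<kappa>2 by simp
  qed
  have SX0: "S X0 = 0" using SX0q by (simp add: S_def)
  have RX0: "R X0 = X0 * of_real (c^2/\<gamma> - c^2)"
  proof -
    have "R X0 = X0 * (X0^2 + 2 * \<kappa> * X0 - of_real (c^2))"
      by (simp add: R_def power2_eq_square power3_eq_cube algebra_simps)
    also have "X0^2 + 2 * \<kappa> * X0 = of_real (c^2/\<gamma>)" using SX0q by simp
    finally show ?thesis by simp
  qed
  have X0: "X0 = - \<i> * k * a1 - cT" by (simp add: X0_def \<kappa>_def)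
  have polyroot: "poly (dispP a1 c \<gamma> k p) X = 0" if "p \<noteq> 0" "of_real p * R X + S X = 0" for p :: real and X :: complex
    using disp_id[of p \<gamma> a1 c k X, OF that(1) gnz] that by (simp add: R_def S_def \<kappa>_def)
  show ?thesis
  proof (cases "\<gamma> = 1")
    case True
    have K0: "K = 0" by (simp add: K_def True)
    have R0: "R X0 = 0" using RX0 True by simp
    show ?thesis
    proof (rule exI[of _ 1], intro conjI exI[of _ "\<lambda>_. X0"] allI impI)
      show "smooth_on {-d<..<d} (\<lambda>_. X0)" if "0 < d \<and> d \<le> 1" for d
        using smooth_const that by blast
      show "X0 = - \<i> * k * a1 - cT" by (rule X0)
      show "poly (dispP a1 c \<gamma> k p) X0 = 0" if "0 < p \<and> p < 1" for p
        using polyroot[of p X0] that R0 SX0 by simp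
      show "X0 \<in> ball X0 (norm cT)" for p using cTnz by simp
      have "(\<lambda>Pr::real. X0 - (- \<i> * k * a1 - cT + (\<gamma> - 1) * c^2 * (k * a1 - \<i> * cT) / (3 * \<gamma>^2 * k * a1 * cT) * Pr)) = (\<lambda>_. 0)"
        using X0 True by simp
      then show "(\<lambda>Pr. X0 - (- \<i> * k * a1 - cT + (\<gamma> - 1) * c^2 * (k * a1 - \<i> * cT) / (3 * \<gamma>^2 * k * a1 * cT) * Pr))
          \<in> O[at_right 0](\<lambda>Pr. complex_of_real (Pr^2))" by simp
      show "(\<lambda>Pr. X0 - X0) \<in> O[at_right 0](\<lambda>Pr. complex_of_real Pr)" by simp
    qed simp
  next
    case False
    have g1': "\<gamma> > 1" using g1 False by simp
    have X0nz: "X0 \<noteq> 0"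
    proof
      assume "X0 = 0"
      then have "cT = - \<kappa>" by (simp add: X0_def)
      then have "cT^2 = \<kappa>^2" by simp
      then have "complex_of_real (c^2 / \<gamma> - k^2 * a1^2) = complex_of_real (- (k^2 * a1^2))"
        using cT \<kappa>2 by simp
      then have "c^2 / \<gamma> = 0" using of_real_eq_iff by fastforce
      then show False using c gnz by simp
    qed
    have cg: "c^2/\<gamma> - c^2 \<noteq> 0"
    proof
      assume "c^2/\<gamma> - c^2 = 0"
      then have "c^2 = c^2 * \<gamma>" using gnz by (simp add: field_simps)
      then show False using c g1' by simp
    qed
    have R0nz: "R X0 \<noteq> 0" using RX0 X0nz cg by (simp del: of_real_diff)
    define \<Omega> where "\<Omega> = {X. R X \<noteq> 0} \<inter> ball X0 (norm cT)"
    have o\<Omega>: "open \<Omega>" unfolding \<Omega>_def R_def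
      by (intro open_Int open_Collect_neq open_ball) (auto intro!: continuous_intros)
    have X0\<Omega>: "X0 \<in> \<Omega>" using R0nz cTnz by (simp add: \<Omega>_def)
    define F where "F = (\<lambda>X. - S X / R X)"
    have holF: "F holomorphic_on \<Omega>" unfolding F_def \<Omega>_def
      by (intro holomorphic_intros) (auto simp: R_def S_def intro!: holomorphic_intros)
    define S' where "S' = of_real (3*\<gamma>/2) * \<kappa> * (2 * X0 + 2 * \<kappa>)"
    define R' where "R' = 3 * X0^2 + 4 * \<kappa> * X0 - of_real (c^2)"
    have dS: "(S has_field_derivative S') (at X0)" unfolding S_def S'_def
      by (auto intro!: derivative_eq_intros simp: algebra_simps)
    have dR: "(R has_field_derivative R') (at X0)" unfolding R_def R'_def
      by (auto intro!: derivative_eq_intros simp: algebra_simps)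
    define D where "D = - S' / R X0"
    have dF: "(F has_field_derivative D) (at X0)"
    proof -
      have "((\<lambda>X. S X / R X) has_field_derivative (S' * R X0 - S X0 * R') / (R X0 * R X0)) (at X0)"
        by (rule DERIV_divide[OF dS dR R0nz])
      then have "((\<lambda>X. - (S X / R X)) has_field_derivative - ((S' * R X0 - S X0 * R') / (R X0 * R X0))) (at X0)"
        by (rule DERIV_minus)
      moreover have "- ((S' * R X0 - S X0 * R') / (R X0 * R X0)) = D"
        using R0nz SX0 by (simp add: D_def)
      ultimately show ?thesis by (simp add: F_def)
    qed
    have S'eq: "S' = - of_real (3*\<gamma>) * \<kappa> * cT"
      by (simp add: S'_def X0_def algebra_simps)
    have S'nz: "S' \<noteq> 0" using S'eq gnz knz cTnz by simp
    have Dnz: "D \<noteq> 0" using S'nz R0nz by (simp add: D_def)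
    have invD: "inverse D = K"
    proof -
      have "inverse D = - R X0 / S'" by (simp add: D_def)
      also have "\<dots> = X0 * of_real (c^2/\<gamma> - c^2) / (of_real (3*\<gamma>) * \<kappa> * cT)"
        by (simp add: RX0 S'eq)
      also have "\<dots> = K"
      proof -
        have e1: "complex_of_real k * complex_of_real a1 - \<i> * cT = \<i> * X0"
          by (simp add: X0_def \<kappa>_def algebra_simps)
        have "X0 * of_real (c^2/\<gamma> - c^2) / (of_real (3*\<gamma>) * \<kappa> * cT)
            = \<i> * X0 * of_real ((\<gamma> - 1) * c^2 / (3 * \<gamma>^2 * k * a1)) / cT"
          using gnz k a1 cTnz
          by (simp add: \<kappa>_def field_simps power2_eq_square)
        also have "\<dots> = K" unfolding K_def e1[symmetric] using gnz k a1 cTnz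
          by (simp add: field_simps)
        finally show ?thesis .
      qed
      finally show ?thesis .
    qed
    obtain e G where eG: "e > 0" "G holomorphic_on ball 0 e" "G 0 = X0"
      "\<forall>p\<in>ball 0 e. G p \<in> \<Omega> \<and> F (G p) = p" "(G has_field_derivative inverse D) (at 0)"
      using local_inverse[OF holF o\<Omega> X0\<Omega> _ dF Dnz] SX0 by (auto simp: F_def)
    note asy = holo_asym[OF eG(2) eG(1) eG(5)]
    show ?thesis
    proof (rule exI[of _ e], intro conjI exI[of _ "\<lambda>t. G (of_real t)"] allI impI)
      show "e > 0" by fact
      show "smooth_on {-d<..<d} (\<lambda>t. G (of_real t))" if "0 < d \<and> d \<le> e" for d
        using smooth_holo[OF eG(2)] that by blast
      show "G (of_real 0) = - \<i> * k * a1 - cT" using eG(3) X0 by simp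
      fix p :: real assume p: "0 < p \<and> p < e"
      then have "of_real p \<in> ball (0::complex) e" by simp
      then have Gp: "G (of_real p) \<in> \<Omega>" "F (G (of_real p)) = of_real p" using eG(4) by auto
      then have Rnz: "R (G (of_real p)) \<noteq> 0" by (simp add: \<Omega>_def)
      have "of_real p * R (G (of_real p)) + S (G (of_real p)) = 0"
        using Gp(2) Rnz by (simp add: F_def field_simps) (metis add.commute neg_eq_iff_add_eq_0)
      then show "poly (dispP a1 c \<gamma> k p) (G (of_real p)) = 0" using polyroot p by simp
      show "G (of_real p) \<in> ball (G (of_real 0)) (norm cT)" using Gp eG(3) by (simp add: \<Omega>_def)
    next
      show "(\<lambda>Pr. G (of_real Pr) - (- \<i> * k * a1 - cT
          + (\<gamma> - 1) * c^2 * (k * a1 - \<i> * cT) / (3 * \<gamma>^2 * k * a1 * cT) * Pr))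
       \<in> O[at_right 0](\<lambda>Pr. complex_of_real (Pr^2))"
        using asy(1) invD eG(3) X0 by (simp add: K_def)
      show "(\<lambda>Pr. G (of_real Pr) - G (of_real 0)) \<in> O[at_right 0](\<lambda>Pr. complex_of_real Pr)"
        using asy(2) by simp
    qed
  qed
qed

lemma cubic_factor:
  fixes x y q0 q1 q2 Z :: complex
  assumes uv: "x \<noteq> y" and hu: "x^3 + q2*x^2 + q1*x + q0 = 0" and hv: "y^3 + q2*y^2 + q1*y + q0 = 0"
  shows "Z^3 + q2*Z^2 + q1*Z + q0 = (Z - x) * (Z - (- q2 - x - y)) * (Z - y)"
proof -
  have "(x - y) * (x^2 + x*y + y^2 + q2*(x+y) + q1) = 0"
    using hu hv by (simp add: algebra_simps power2_eq_square power3_eq_cube) (metis diff_self hu hv add_diff_cancel_left' diff_add_cancel)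
  then have E: "x^2 + x*y + y^2 + q2*(x+y) + q1 = 0" using uv by simp
  have q1: "q1 = - (x^2 + x*y + y^2 + q2*(x+y))"
  proof -
    have "q1 = (x^2 + x*y + y^2 + q2*(x+y) + q1) - (x^2 + x*y + y^2 + q2*(x+y))" by simp
    then show ?thesis using E by simp
  qed
  have q0: "q0 = - (x^3 + q2*x^2 + q1*x)"
  proof -
    have "q0 = (x^3 + q2*x^2 + q1*x + q0) - (x^3 + q2*x^2 + q1*x)" by simp
    then show ?thesis using hu by simp
  qed
  show ?thesis unfolding q0 unfolding q1
    by (simp add: algebra_simps power2_eq_square power3_eq_cube)
qed

lemma poly_dispP:
  "poly (dispP a1 c \<gamma> k p) X = X^3 + (2 * \<i> * complex_of_real (k * a1 * (1 + 3 * \<gamma> / (4 * p)))) * X^2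
     + (- complex_of_real (c^2 + 3 * \<gamma> / p * a1^2 * k^2)) * X + (- \<i> * complex_of_real (3 * k * a1 * c^2 / (2 * p)))"
  unfolding dispP_def by (simp add: algebra_simps power2_eq_square power3_eq_cube del: of_real_mult of_real_add of_real_divide)

lemma ex3I: "P a b c \<Longrightarrow> \<exists>x y z. P x y z" by blast

theorem proposition3:
  fixes k a1 c \<gamma> :: real and cT :: complex
  assumes "a1 > 0" and "c > 0" and "\<gamma> \<ge> 1" and "k \<noteq> 0"
    and "c^2 / \<gamma> \<noteq> k^2 * a1^2"
    and "cT^2 = complex_of_real (c^2 / \<gamma> - k^2 * a1^2)"
  shows "\<exists>\<delta>>0. \<exists>(xm :: real \<Rightarrow> complex) (x0 :: real \<Rightarrow> complex) (xp :: real \<Rightarrow> complex).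
     (\<forall>Pr\<in>{0<..<\<delta>}. \<forall>X. poly (dispP a1 c \<gamma> k Pr) X = (X - xm Pr) * (X - x0 Pr) * (X - xp Pr))
   \<and> smooth_on {-\<delta><..<\<delta>} xm \<and> smooth_on {-\<delta><..<\<delta>} xp
   \<and> xm 0 = - \<i> * k * a1 - cT \<and> xp 0 = - \<i> * k * a1 + cT
   \<and> (\<lambda>Pr. xm Pr - (- \<i> * k * a1 - cT
          + (\<gamma> - 1) * c^2 * (k * a1 - \<i> * cT) / (3 * \<gamma>^2 * k * a1 * cT) * Pr))
       \<in> O[at_right 0](\<lambda>Pr. complex_of_real (Pr^2))
   \<and> (\<lambda>Pr. xp Pr - (- \<i> * k * a1 + cT
          - (\<gamma> - 1) * c^2 * (k * a1 + \<i> * cT) / (3 * \<gamma>^2 * k * a1 * cT) * Pr))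
       \<in> O[at_right 0](\<lambda>Pr. complex_of_real (Pr^2))
   \<and> (\<lambda>Pr. x0 Pr - (- \<i> * complex_of_real (3 * k * a1 * \<gamma> / (2 * Pr))))
       \<in> O[at_right 0](\<lambda>Pr. complex_of_real Pr)"
proof -
  note A = assms(1-5)
  have cT': "(-cT)^2 = complex_of_real (c^2 / \<gamma> - k^2 * a1^2)" using assms(6) by simp
  obtain em gm where m: "em > 0" "\<forall>d. 0 < d \<and> d \<le> em \<longrightarrow> smooth_on {-d<..<d} gm"
     "gm 0 = - \<i> * k * a1 - cT"
     "\<forall>p. 0 < p \<and> p < em \<longrightarrow> poly (dispP a1 c \<gamma> k p) (gm p) = 0"
     "\<forall>p. 0 < p \<and> p < em \<longrightarrow> gm p \<in> ball (gm 0) (norm cT)"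
     "(\<lambda>Pr. gm Pr - (- \<i> * k * a1 - cT
          + (\<gamma> - 1) * c^2 * (k * a1 - \<i> * cT) / (3 * \<gamma>^2 * k * a1 * cT) * Pr))
       \<in> O[at_right 0](\<lambda>Pr. complex_of_real (Pr^2))"
     "(\<lambda>Pr. gm Pr - gm 0) \<in> O[at_right 0](\<lambda>Pr. complex_of_real Pr)"
    using branch[OF A assms(6)] by blast
  obtain ep gp where p: "ep > 0" "\<forall>d. 0 < d \<and> d \<le> ep \<longrightarrow> smooth_on {-d<..<d} gp"
     "gp 0 = - \<i> * k * a1 - (-cT)"
     "\<forall>p. 0 < p \<and> p < ep \<longrightarrow> poly (dispP a1 c \<gamma> k p) (gp p) = 0"
     "\<forall>p. 0 < p \<and> p < ep \<longrightarrow> gp p \<in> ball (gp 0) (norm (-cT))"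
     "(\<lambda>Pr. gp Pr - (- \<i> * k * a1 - (-cT)
          + (\<gamma> - 1) * c^2 * (k * a1 - \<i> * (-cT)) / (3 * \<gamma>^2 * k * a1 * (-cT)) * Pr))
       \<in> O[at_right 0](\<lambda>Pr. complex_of_real (Pr^2))"
     "(\<lambda>Pr. gp Pr - gp 0) \<in> O[at_right 0](\<lambda>Pr. complex_of_real Pr)"
    using branch[OF A cT'] by blast
  define \<delta> where "\<delta> = min em ep"
  define A2 where "A2 = (\<lambda>Pr::real. 2 * \<i> * complex_of_real (k * a1 * (1 + 3 * \<gamma> / (4 * Pr))))"
  define x0 where "x0 = (\<lambda>Pr. - A2 Pr - gm Pr - gp Pr)"
  show ?thesis
  proof (rule exI[of _ \<delta>], rule conjI[OF _ ex3I[of _ gm x0 gp]]; (intro conjI)?)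
    show "\<delta> > 0" using m(1) p(1) by (simp add: \<delta>_def)
    show "\<forall>Pr\<in>{0<..<\<delta>}. \<forall>X. poly (dispP a1 c \<gamma> k Pr) X = (X - gm Pr) * (X - x0 Pr) * (X - gp Pr)"
    proof (intro ballI allI)
    fix Pr :: real and X :: complex assume Pr: "Pr \<in> {0<..<\<delta>}"
    then have Pm: "0 < Pr \<and> Pr < em" and Pp: "0 < Pr \<and> Pr < ep" by (auto simp: \<delta>_def)
    have ne: "gm Pr \<noteq> gp Pr"
    proof
      assume eq: "gm Pr = gp Pr"
      have "dist (gm 0) (gm Pr) < norm cT" using m(5) Pm by auto
      moreover have "dist (gp Pr) (gp 0) < norm cT" using p(5) Pp by (auto simp: dist_commute)
      ultimately have "dist (gm 0) (gp 0) < 2 * norm cT" using eq dist_triangle[of "gm 0" "gp 0" "gm Pr"]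
        by (simp add: dist_commute)
      moreover have "dist (gm 0) (gp 0) = 2 * norm cT" using m(3) p(3) by (simp add: dist_norm norm_minus_commute)
      ultimately show False by simp
    qed
    show "poly (dispP a1 c \<gamma> k Pr) X = (X - gm Pr) * (X - x0 Pr) * (X - gp Pr)"
    proof -
      have hm: "poly (dispP a1 c \<gamma> k Pr) (gm Pr) = 0" using m(4) Pm by blast
      have hp: "poly (dispP a1 c \<gamma> k Pr) (gp Pr) = 0" using p(4) Pp by blast
      show ?thesis unfolding poly_dispP x0_def A2_def
        by (rule cubic_factor[OF ne hm[unfolded poly_dispP] hp[unfolded poly_dispP]])
    qed
    qed
    show "smooth_on {-\<delta><..<\<delta>} gm" using m(1,2) p(1) by (simp add: \<delta>_def)
    show "smooth_on {-\<delta><..<\<delta>} gp" using p(1,2) m(1) by (simp add: \<delta>_def)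
    show "gm 0 = - \<i> * k * a1 - cT" by (rule m(3))
    show "gp 0 = - \<i> * k * a1 + cT" using p(3) by simp
    show "(\<lambda>Pr. gm Pr - (- \<i> * k * a1 - cT
          + (\<gamma> - 1) * c^2 * (k * a1 - \<i> * cT) / (3 * \<gamma>^2 * k * a1 * cT) * Pr))
       \<in> O[at_right 0](\<lambda>Pr. complex_of_real (Pr^2))" by (rule m(6))
    show "(\<lambda>Pr. gp Pr - (- \<i> * k * a1 + cT
          - (\<gamma> - 1) * c^2 * (k * a1 + \<i> * cT) / (3 * \<gamma>^2 * k * a1 * cT) * Pr))
       \<in> O[at_right 0](\<lambda>Pr. complex_of_real (Pr^2))"
      using p(6) by (simp add: algebra_simps)
    have big: "(\<lambda>Pr. - (gm Pr - gm 0) - (gp Pr - gp 0)) \<in> O[at_right 0](\<lambda>Pr. complex_of_real Pr)"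
    proof -
      have "(\<lambda>Pr. - (gm Pr - gm 0)) \<in> O[at_right 0](\<lambda>Pr. complex_of_real Pr)"
        using m(7) by (simp only: landau_o.big.uminus_in_iff)
      from sum_in_bigo(2)[OF this p(7)] show ?thesis .
    qed
    have ev: "\<forall>\<^sub>F Pr in at_right 0. - (gm Pr - gm 0) - (gp Pr - gp 0)
        = x0 Pr - (- \<i> * complex_of_real (3 * k * a1 * \<gamma> / (2 * Pr)))"
      unfolding eventually_at_right_field
    proof (rule exI[of _ 1], intro conjI allI impI)
      fix Pr :: real assume "0 < Pr" "Pr < 1"
      then show "- (gm Pr - gm 0) - (gp Pr - gp 0) = x0 Pr - (- \<i> * complex_of_real (3 * k * a1 * \<gamma> / (2 * Pr)))"
      proof -
        have a: "A2 Pr = 2 * \<i> * of_real (k * a1) + \<i> * complex_of_real (3 * k * a1 * \<gamma> / (2 * Pr))"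
          using \<open>0 < Pr\<close> unfolding A2_def by (simp add: field_simps)
        have b: "gm 0 + gp 0 = - 2 * \<i> * of_real (k * a1)" unfolding m(3) p(3) by simp
        show ?thesis unfolding x0_def a using b by (simp add: algebra_simps)
      qed
    qed simp
    show "(\<lambda>Pr. x0 Pr - (- \<i> * complex_of_real (3 * k * a1 * \<gamma> / (2 * Pr))))
       \<in> O[at_right 0](\<lambda>Pr. complex_of_real Pr)"
      by (rule landau_o.big.in_cong[THEN iffD1, OF ev big])
  qed
qed

end
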